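(* For every $n\ge1$, $D(\alpha).Q_n(\alpha)=(\alpha^2n^2-n\alpha)Q_n(\alpha)$.
   Context: $F=\mathbb{Q}(\alpha)$, $\Lambda_F=F[p_1,p_2,\dots]$ with $p_n$ the power sums. For a partition $\lambda$ with $m_i$ parts equal to $i$, $l(\lambda)$ is its number of parts, $z_\lambda=\prod_i i^{m_i}m_i!$, $p_\lambda=\prod p_{\lambda_i}$. $Q_n(\alpha)=\sum_{\lambda\vdash n}\alpha^{-l(\lambda)}z_\lambda^{-1}p_\lambda$. The operator $$D(\alpha)=\sum_{i,j\ge1}(i+j)\alpha\,p_ip_j\frac{\partial}{\partial p_{i+j}}+\sum_{i,j\ge1}ij\alpha^2p_{i+j}\frac{\partial^2}{\partial p_i\partial p_j}+\alpha(\alpha-1)\sum_{k\ge1}k^2p_k\frac{\partial}{\partial p_k}.$$ *)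

theory Defs
  imports Main "HOL-Library.Multiset" "HOL-Library.Groups_Big_Fun"
    "HOL-Computational_Algebra.Polynomial" "HOL-Computational_Algebra.Fraction_Field"
begin

text \<open>The field F = Q(alpha): rational functions over Q in an indeterminate alpha.\<close>
type_synonym F = "rat poly fract"

definition alpha :: F where
  "alpha = Fract [:0, 1:] 1"

text \<open>An element of Lambda_F = F[p_1,p_2,...] is represented by its coefficient function
  on the monomial basis: a monomial p_lambda = prod p_(lambda_i) is indexed by the multiset
  lambda of its (positive) indices.  Elements of Lambda_F have finitely supported coefficient
  functions; the operators below are defined on arbitrary coefficient functions.\<close>
type_synonym sym = "nat multiset \<Rightarrow> F"

definition mulp :: "nat \<Rightarrow> sym \<Rightarrow> sym" where
  "mulp i f = (\<lambda>\<mu>. if i \<in># \<mu> then f (\<mu> - {#i#}) else 0)"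

definition dp :: "nat \<Rightarrow> sym \<Rightarrow> sym" where
  "dp k f = (\<lambda>\<mu>. of_nat (count \<mu> k + 1) * f (\<mu> + {#k#}))"

text \<open>The operator D(alpha); the formally infinite sums over i,j,k \<ge> 1 have, at each
  coefficient, only finitely many nonzero terms, and are taken as finite-support sums.\<close>
definition D_op :: "sym \<Rightarrow> sym" where
  "D_op f = (\<lambda>\<mu>.
      (\<Sum>(i,j). if 1 \<le> i \<and> 1 \<le> j then
          of_nat (i + j) * alpha * mulp i (mulp j (dp (i + j) f)) \<mu> else 0)
    + (\<Sum>(i,j). if 1 \<le> i \<and> 1 \<le> j then
          of_nat (i * j) * alpha ^ 2 * mulp (i + j) (dp i (dp j f)) \<mu> else 0)
    + alpha * (alpha - 1) * (\<Sum>k. if 1 \<le> k then of_nat (k ^ 2) * mulp k (dp k f) \<mu> else 0))"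

definition is_partition :: "nat multiset \<Rightarrow> nat \<Rightarrow> bool" where
  "is_partition lam n \<longleftrightarrow> 0 \<notin># lam \<and> sum_mset lam = n"

definition z_part :: "nat multiset \<Rightarrow> nat" where
  "z_part lam = (\<Prod>i\<in>set_mset lam. i ^ count lam i * fact (count lam i))"

definition Q :: "nat \<Rightarrow> sym" where
  "Q n = (\<lambda>lam. if is_partition lam n
              then inverse (alpha ^ size lam) * inverse (of_nat (z_part lam)) else 0)"

end

theory Submission
  imports Defs
begin


lemma alpha_nz: "alpha \<noteq> 0"
proof
  assume "alpha = 0"
  hence "Fract [:0, 1:] (1::rat poly) = Fract 0 1" unfolding alpha_def by (simp add: fract_collapse)
  thus False by (simp add: eq_fract)
qed

definition cc :: "nat multiset \<Rightarrow> F" where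
  "cc \<nu> = inverse (alpha ^ size \<nu>) * inverse (of_nat (z_part \<nu>))"

lemma Q_eq: "Q n \<nu> = (if is_partition \<nu> n then cc \<nu> else 0)"
  by (simp add: Q_def cc_def)

lemma z_alt: "z_part \<nu> = (\<Prod>i\<in>insert k (set_mset \<nu>). i ^ count \<nu> i * fact (count \<nu> i))"
proof (cases "k \<in># \<nu>")
  case True then show ?thesis by (simp add: z_part_def insert_absorb)
next
  case False then show ?thesis by (simp add: z_part_def not_in_iff)
qed

lemma z_ins: "z_part (add_mset k \<nu>) = z_part \<nu> * k * (count \<nu> k + 1)"
proof -
  have "z_part (add_mset k \<nu>) = (k ^ (count \<nu> k + 1) * fact (count \<nu> k + 1)) *
     (\<Prod>i\<in>set_mset \<nu> - {k}. i ^ count (add_mset k \<nu>) i * fact (count (add_mset k \<nu>) i))"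
    unfolding z_part_def by (simp add: prod.insert_remove)
  also have "(\<Prod>i\<in>set_mset \<nu> - {k}. i ^ count (add_mset k \<nu>) i * fact (count (add_mset k \<nu>) i))
     = (\<Prod>i\<in>set_mset \<nu> - {k}. i ^ count \<nu> i * fact (count \<nu> i))"
    by (rule prod.cong) auto
  also have "z_part \<nu> = (k ^ count \<nu> k * fact (count \<nu> k)) *
     (\<Prod>i\<in>set_mset \<nu> - {k}. i ^ count \<nu> i * fact (count \<nu> i))"
    by (subst z_alt[of _ k]) (simp add: prod.insert_remove)
  ultimately show ?thesis by (simp add: algebra_simps)
qed

lemma cc_ins:
  assumes "1 \<le> k"
  shows "cc \<nu> = cc (add_mset k \<nu>) * (alpha * of_nat k * of_nat (count \<nu> k + 1))"
proof -
  have "cc (add_mset k \<nu>) = cc \<nu> * inverse alpha * inverse (of_nat k) * inverse (of_nat (count \<nu> k + 1))"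
  proof -
    have z: "(of_nat (z_part (add_mset k \<nu>)) :: F) = of_nat (z_part \<nu>) * of_nat k * of_nat (count \<nu> k + 1)"
      by (simp only: z_ins of_nat_mult)
    show ?thesis unfolding cc_def z size_add_mset power_Suc inverse_mult_distrib by (simp only: mult_ac)
  qed
  moreover have "alpha \<noteq> 0" "(of_nat k :: F) \<noteq> 0" 
    using alpha_nz assms by auto
  moreover have "(of_nat (count \<nu> k + 1) :: F) \<noteq> 0"
    by (metis Suc_eq_plus1 of_nat_neq_0)
  ultimately show ?thesis by (simp add: field_simps del: of_nat_Suc)
qed

lemma part2: "1 \<le> i \<Longrightarrow> 1 \<le> j \<Longrightarrow>
  is_partition (add_mset i (add_mset j \<nu>)) n = is_partition (add_mset (i+j) \<nu>) n"
  by (auto simp: is_partition_def)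

lemma T1:
  assumes "1 \<le> i" "1 \<le> j"
  shows "of_nat (i + j) * alpha * mulp i (mulp j (dp (i + j) (Q n))) \<mu>
    = alpha^2 * of_nat (i*j*count \<mu> i*(count \<mu> j - (if i = j then 1 else 0))) * Q n \<mu>"
proof (cases "i \<in># \<mu> \<and> j \<in># \<mu> - {#i#}")
  case True
  define \<nu> where "\<nu> = \<mu> - {#i#} - {#j#}"
  have mu: "\<mu> = add_mset i (add_mset j \<nu>)"
    using True unfolding \<nu>_def by (metis insert_DiffM)
  have L: "mulp i (mulp j (dp (i + j) (Q n))) \<mu> = of_nat (count \<nu> (i+j) + 1) * Q n (add_mset (i+j) \<nu>)"
    using True by (simp add: mulp_def dp_def \<nu>_def)
  have c1: "cc \<nu> = cc (add_mset (i+j) \<nu>) * (alpha * of_nat (i+j) * of_nat (count \<nu> (i+j) + 1))"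
    by (rule cc_ins) (use assms in simp)
  have c2: "cc \<nu> = cc (add_mset j \<nu>) * (alpha * of_nat j * of_nat (count \<nu> j + 1))"
    by (rule cc_ins) (use assms in simp)
  have c3: "cc (add_mset j \<nu>) = cc \<mu> * (alpha * of_nat i * of_nat (count (add_mset j \<nu>) i + 1))"
    unfolding mu by (rule cc_ins) (use assms in simp)
  have cnt: "count \<mu> i = count (add_mset j \<nu>) i + 1" "count \<mu> j - (if i = j then 1 else 0) = count \<nu> j + 1"
    using mu by auto
  have P: "is_partition (add_mset (i+j) \<nu>) n = is_partition \<mu> n" using part2 assms mu by simp
  have key: "of_nat (i+j) * alpha * (of_nat (count \<nu> (i+j) + 1) * cc (add_mset (i+j) \<nu>))
     = alpha^2 * of_nat (i*j*(count (add_mset j \<nu>) i + 1)*(count \<nu> j + 1)) * cc \<mu>"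
  proof -
    have "of_nat (i+j) * alpha * (of_nat (count \<nu> (i+j) + 1) * cc (add_mset (i+j) \<nu>)) = cc \<nu>"
      unfolding c1 by (simp only: ac_simps)
    also have "\<dots> = alpha^2 * of_nat (i*j*(count (add_mset j \<nu>) i + 1)*(count \<nu> j + 1)) * cc \<mu>"
      unfolding c2 c3 by (simp only: of_nat_mult power2_eq_square ac_simps)
    finally show ?thesis .
  qed
  show ?thesis
    unfolding L Q_eq P cnt
    by (cases "is_partition \<mu> n") (simp_all only: if_True if_False key mult_zero_right mult_zero_left)
next
  case False
  hence "count \<mu> i = 0 \<or> count \<mu> j - (if i = j then 1 else 0) = 0"
    by (auto simp: not_in_iff split: if_splits)
  moreover have "mulp i (mulp j (dp (i + j) (Q n))) \<mu> = 0" using False by (auto simp: mulp_def)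
  ultimately show ?thesis by auto
qed

lemma T2:
  assumes "1 \<le> i" "1 \<le> j"
  shows "of_nat (i * j) * alpha ^ 2 * mulp (i + j) (dp i (dp j (Q n))) \<mu>
    = alpha * of_nat ((i+j) * count \<mu> (i+j)) * Q n \<mu>"
proof (cases "i + j \<in># \<mu>")
  case True
  define \<nu> where "\<nu> = \<mu> - {#i+j#}"
  have mu: "\<mu> = add_mset (i+j) \<nu>"
    using True unfolding \<nu>_def by (metis insert_DiffM)
  have L: "mulp (i + j) (dp i (dp j (Q n))) \<mu> = of_nat (count \<nu> i + 1) *
     (of_nat (count (add_mset i \<nu>) j + 1) * Q n (add_mset j (add_mset i \<nu>)))"
    using True by (simp add: mulp_def dp_def \<nu>_def)
  have c1: "cc (add_mset i \<nu>) = cc (add_mset j (add_mset i \<nu>)) * (alpha * of_nat j * of_nat (count (add_mset i \<nu>) j + 1))"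
    by (rule cc_ins) (use assms in simp)
  have c2: "cc \<nu> = cc (add_mset i \<nu>) * (alpha * of_nat i * of_nat (count \<nu> i + 1))"
    by (rule cc_ins) (use assms in simp)
  have c3: "cc \<nu> = cc \<mu> * (alpha * of_nat (i+j) * of_nat (count \<nu> (i+j) + 1))"
    unfolding mu by (rule cc_ins) (use assms in simp)
  have cnt: "count \<mu> (i+j) = count \<nu> (i+j) + 1"
    using mu by auto
  have P: "is_partition (add_mset j (add_mset i \<nu>)) n = is_partition \<mu> n"
    using part2[OF assms(2,1)] mu by (simp add: add.commute)
  have key: "of_nat (i * j) * alpha ^ 2 * (of_nat (count \<nu> i + 1) *
     (of_nat (count (add_mset i \<nu>) j + 1) * cc (add_mset j (add_mset i \<nu>))))
     = alpha * of_nat ((i+j) * (count \<nu> (i+j) + 1)) * cc \<mu>"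
  proof -
    have "of_nat (i * j) * alpha ^ 2 * (of_nat (count \<nu> i + 1) *
     (of_nat (count (add_mset i \<nu>) j + 1) * cc (add_mset j (add_mset i \<nu>)))) = cc \<nu>"
      unfolding c2 c1 by (simp only: of_nat_mult power2_eq_square ac_simps)
    also have "\<dots> = alpha * of_nat ((i+j) * (count \<nu> (i+j) + 1)) * cc \<mu>"
      unfolding c3 by (simp only: of_nat_mult ac_simps)
    finally show ?thesis .
  qed
  show ?thesis
    unfolding L Q_eq P cnt
    by (cases "is_partition \<mu> n") (simp_all only: if_True if_False key mult_zero_right mult_zero_left)
next
  case False
  hence "count \<mu> (i+j) = 0" by (simp add: not_in_iff)
  thus ?thesis using False by (simp add: mulp_def)
qed

lemma T3:
  shows "of_nat (k ^ 2) * mulp k (dp k (Q n)) \<mu> = of_nat (k^2 * count \<mu> k) * Q n \<mu>"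
proof (cases "k \<in># \<mu>")
  case True
  have mu: "add_mset k (\<mu> - {#k#}) = \<mu>" using True by (metis insert_DiffM)
  have cnt: "count (\<mu> - {#k#}) k + 1 = count \<mu> k" using True by (simp add: Suc_leI)
  show ?thesis using True by (simp add: mulp_def dp_def mu cnt del: of_nat_Suc)
next
  case False
  hence "count \<mu> k = 0" by (simp add: not_in_iff)
  thus ?thesis using False by (simp add: mulp_def)
qed



lemma sum_mset_count: "sum_mset (M::nat multiset) = (\<Sum>k\<in>set_mset M. k * count M k)"
proof (induction M)
  case empty then show ?case by simp
next
  case (add x M)
  have "(\<Sum>k\<in>set_mset (add_mset x M). k * count (add_mset x M) k)
      = (\<Sum>k\<in>insert x (set_mset M). k * count M k + (if k = x then k else 0))"
    by (rule sum.cong) auto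
  also have "\<dots> = (\<Sum>k\<in>insert x (set_mset M). k * count M k) + x"
    by (simp add: sum.distrib)
  also have "(\<Sum>k\<in>insert x (set_mset M). k * count M k) = (\<Sum>k\<in>set_mset M. k * count M k)"
    by (cases "x \<in># M") (auto simp: insert_absorb not_in_iff)
  finally show ?case using add by simp
qed

lemma aux1: "1 \<le> b \<Longrightarrow> (of_nat (a * (b - 1)) :: F) = of_nat (a*b) - of_nat a"
  by (simp add: of_nat_diff right_diff_distrib)

theorem lemma3p5:
  fixes n :: nat
  assumes "1 \<le> n"
  shows "D_op (Q n) = (\<lambda>\<mu>. (alpha ^ 2 * of_nat n ^ 2 - of_nat n * alpha) * Q n \<mu>)"
proof (rule ext)
  fix \<mu>
  define X where "X = Q n \<mu>"
  define g1 where "g1 = (\<lambda>(i,j). if 1 \<le> i \<and> 1 \<le> j then alpha^2 * of_nat (i*j*count \<mu> i*(count \<mu> j - (if i = j then 1 else 0))) * X else (0::F))"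
  define g2 where "g2 = (\<lambda>(i,j). if 1 \<le> i \<and> 1 \<le> j then alpha * of_nat ((i+j) * count \<mu> (i+j)) * X else (0::F))"
  define g3 where "g3 = (\<lambda>k. if 1 \<le> k then of_nat (k^2 * count \<mu> k) * X else (0::F))"
  have e1: "(\<lambda>(i,j). if 1 \<le> i \<and> 1 \<le> j then of_nat (i + j) * alpha * mulp i (mulp j (dp (i + j) (Q n))) \<mu> else 0) = g1"
    unfolding g1_def X_def fun_eq_iff split_paired_All case_prod_conv
  proof (intro allI)
    fix i j :: nat
    show "(if 1 \<le> i \<and> 1 \<le> j then of_nat (i + j) * alpha * mulp i (mulp j (dp (i + j) (Q n))) \<mu> else 0) =
      (if 1 \<le> i \<and> 1 \<le> j then alpha\<^sup>2 * of_nat (i * j * count \<mu> i * (count \<mu> j - (if i = j then 1 else 0))) * Q n \<mu> else 0)"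
      using T1[of i j n \<mu>] by auto
  qed
  have e2: "(\<lambda>(i,j). if 1 \<le> i \<and> 1 \<le> j then of_nat (i * j) * alpha ^ 2 * mulp (i + j) (dp i (dp j (Q n))) \<mu> else 0) = g2"
    unfolding g2_def X_def fun_eq_iff split_paired_All case_prod_conv
  proof (intro allI)
    fix i j :: nat
    show "(if 1 \<le> i \<and> 1 \<le> j then of_nat (i * j) * alpha ^ 2 * mulp (i + j) (dp i (dp j (Q n))) \<mu> else 0) =
      (if 1 \<le> i \<and> 1 \<le> j then alpha * of_nat ((i + j) * count \<mu> (i + j)) * Q n \<mu> else 0)"
      using T2[of i j n \<mu>] by auto
  qed
  have e3: "(\<lambda>k. if 1 \<le> k then of_nat (k ^ 2) * mulp k (dp k (Q n)) \<mu> else 0) = g3"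
    unfolding g3_def X_def fun_eq_iff using T3 by metis
  have D: "D_op (Q n) \<mu> = Sum_any g1 + Sum_any g2 + alpha * (alpha - 1) * Sum_any g3"
    unfolding D_op_def e1 [symmetric] e2 [symmetric] e3 [symmetric] by (rule refl)
  show "D_op (Q n) \<mu> = (alpha ^ 2 * of_nat n ^ 2 - of_nat n * alpha) * Q n \<mu>"
  proof (cases "is_partition \<mu> n")
    case False
    hence "X = 0" by (simp add: X_def Q_def)
    hence "g1 = (\<lambda>_. 0)" "g2 = (\<lambda>_. 0)" "g3 = (\<lambda>_. 0)"
      by (auto simp: g1_def g2_def g3_def fun_eq_iff)
    then show ?thesis using D \<open>X = 0\<close> by (simp add: X_def)
  next
    case True
    hence nz: "0 \<notin># \<mu>" and sm: "sum_mset \<mu> = n" by (auto simp: is_partition_def)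
    have pos: "k \<in># \<mu> \<Longrightarrow> 1 \<le> k" for k using nz by (cases k) auto
    have cpos: "k \<in># \<mu> \<Longrightarrow> 1 \<le> count \<mu> k" for k by (simp add: Suc_leI)
    define N :: F where "N = of_nat n"
    define S :: F where "S = (\<Sum>k\<in>set_mset \<mu>. of_nat (k^2 * count \<mu> k))"
    have nsum: "N = (\<Sum>k\<in>set_mset \<mu>. of_nat k * of_nat (count \<mu> k))"
      unfolding N_def sm [symmetric] sum_mset_count by simp
    have s3: "Sum_any g3 = S * X"
    proof -
      have "Sum_any g3 = sum g3 (set_mset \<mu>)"
        by (rule Sum_any.expand_superset) (auto simp: g3_def not_in_iff)
      also have "\<dots> = (\<Sum>k\<in>set_mset \<mu>. of_nat (k^2 * count \<mu> k) * X)"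
        by (rule sum.cong) (auto simp: g3_def pos)
      finally show ?thesis by (simp add: S_def sum_distrib_right)
    qed
    have s1: "Sum_any g1 = alpha^2 * (N^2 - S) * X"
    proof -
      have "Sum_any g1 = sum g1 (set_mset \<mu> \<times> set_mset \<mu>)"
        by (rule Sum_any.expand_superset) (auto simp: g1_def not_in_iff split: if_splits)
      also have "\<dots> = (\<Sum>(i,j)\<in>set_mset \<mu> \<times> set_mset \<mu>. alpha^2 * X *
            ((of_nat i * of_nat (count \<mu> i)) * (of_nat j * of_nat (count \<mu> j))
             - (if i = j then of_nat (i^2 * count \<mu> i) else 0)))"
      proof (rule sum.cong[OF refl])
        fix p assume "p \<in> set_mset \<mu> \<times> set_mset \<mu>"
        then obtain i j where pij: "p = (i, j)" and i: "i \<in># \<mu>" and j: "j \<in># \<mu>" by auto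
        have "(of_nat (i*j*count \<mu> i*(count \<mu> j - (if i = j then 1 else 0))) :: F)
           = (of_nat i * of_nat (count \<mu> i)) * (of_nat j * of_nat (count \<mu> j))
             - (if i = j then of_nat (i^2 * count \<mu> i) else 0)"
        proof (cases "i = j")
          case True
          then show ?thesis using aux1[OF cpos[OF j], of "i*j*count \<mu> i"]
            by (simp add: power2_eq_square mult_ac)
        next
          case False then show ?thesis by (simp add: mult_ac)
        qed
        then have "g1 (i, j) = alpha^2 * X *
            ((of_nat i * of_nat (count \<mu> i)) * (of_nat j * of_nat (count \<mu> j))
             - (if i = j then of_nat (i^2 * count \<mu> i) else 0))"
          using pos[OF i] pos[OF j] by (simp add: g1_def mult_ac)
        then show "g1 p = (\<lambda>(i,j). alpha^2 * X *
            ((of_nat i * of_nat (count \<mu> i)) * (of_nat j * of_nat (count \<mu> j))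
             - (if i = j then of_nat (i^2 * count \<mu> i) else 0))) p"
          unfolding pij by simp
      qed
      also have "\<dots> = (\<Sum>i\<in>set_mset \<mu>. \<Sum>j\<in>set_mset \<mu>. alpha^2 * X *
            ((of_nat i * of_nat (count \<mu> i)) * (of_nat j * of_nat (count \<mu> j))
             - (if i = j then of_nat (i^2 * count \<mu> i) else 0)))"
        by (rule sum.cartesian_product[symmetric])
      also have "\<dots> = alpha^2 * X * (N * N - S)"
        by (simp add: sum_distrib_left [symmetric] sum_subtractf nsum sum_product S_def)
      finally show ?thesis by (simp add: power2_eq_square mult_ac)
    qed
    have s2: "Sum_any g2 = alpha * (S - N) * X"
    proof -
      define h where "h = (\<lambda>(s::nat,i::nat). (i, s - i))"
      define Sg where "Sg = (SIGMA s:set_mset \<mu>. {1..<s})"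
      have fin: "finite Sg" unfolding Sg_def by auto
      have inj: "inj_on h Sg" unfolding h_def Sg_def inj_on_def by auto
      have sup: "{p. g2 p \<noteq> 0} \<subseteq> h ` Sg"
      proof
        fix p assume "p \<in> {p. g2 p \<noteq> 0}"
        then obtain i j where p: "p = (i,j)" and ij: "1 \<le> i" "1 \<le> j" "count \<mu> (i+j) \<noteq> 0"
          by (cases p) (auto simp: g2_def split: if_splits)
        have "(i+j, i) \<in> Sg" using ij by (auto simp: Sg_def)
        moreover have "p = h (i+j, i)" using p by (simp add: h_def)
        ultimately show "p \<in> h ` Sg" by blast
      qed
      have "Sum_any g2 = sum g2 (h ` Sg)"
        by (rule Sum_any.expand_superset) (use fin sup in auto)
      also have "\<dots> = sum (g2 \<circ> h) Sg" by (rule sum.reindex[OF inj])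
      also have "\<dots> = (\<Sum>s\<in>set_mset \<mu>. \<Sum>i\<in>{1..<s}. (g2 \<circ> h) (s, i))"
        unfolding Sg_def using sum.Sigma[of "set_mset \<mu>" "\<lambda>s. {1..<s}" "\<lambda>s i. (g2 \<circ> h) (s, i)"] by simp
      also have "\<dots> = (\<Sum>s\<in>set_mset \<mu>. \<Sum>i\<in>{1..<s}. alpha * X * of_nat (s * count \<mu> s))"
        by (intro sum.cong refl) (auto simp: h_def g2_def mult_ac)
      also have "\<dots> = (\<Sum>s\<in>set_mset \<mu>. alpha * X * (of_nat (s^2 * count \<mu> s) - of_nat s * of_nat (count \<mu> s)))"
      proof (intro sum.cong refl)
        fix s assume s: "s \<in> set_mset \<mu>"
        obtain t where st: "s = Suc t" using pos[OF s] by (cases s) auto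
        show "(\<Sum>i\<in>{1..<s}. alpha * X * of_nat (s * count \<mu> s)) =
          alpha * X * (of_nat (s^2 * count \<mu> s) - of_nat s * of_nat (count \<mu> s))"
          unfolding st by (simp add: power2_eq_square algebra_simps)
      qed
      also have "\<dots> = alpha * X * (S - N)"
        by (simp add: sum_distrib_left [symmetric] sum_subtractf nsum S_def)
      finally show ?thesis by (simp add: mult_ac)
    qed
    show ?thesis unfolding D s1 s2 s3 X_def [symmetric] N_def [symmetric]
      by (simp add: algebra_simps power2_eq_square)
  qed
qed

end
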